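(* A dual-rail CNOT gate cannot be heralded with a single ancilla photon in the following sense. Let $N=5$, and for each $k=1,\dots,4$ let the input be the Fock state $|x_k,1\rangle$ (first four modes $x_k$, one photon in mode $5$) where $x_1=(1,0,1,0)$, $x_2=(1,0,0,1)$, $x_3=(0,1,1,0)$, $x_4=(0,1,0,1)$, and let the corresponding targets be $Q_1=a^\dagger_1a^\dagger_3$, $Q_2=a^\dagger_1a^\dagger_4$, $Q_3=a^\dagger_2a^\dagger_4$, $Q_4=a^\dagger_2a^\dagger_3$ (i.e. $|1,0,1,0\rangle\mapsto|1,0,1,0\rangle$, $|1,0,0,1\rangle\mapsto|1,0,0,1\rangle$, $|0,1,1,0\rangle\mapsto|0,1,0,1\rangle$, $|0,1,0,1\rangle\mapsto|0,1,1,0\rangle$). Then there is no complex $5\times5$ matrix $A$ and no $\gamma\in\mathbb{C}$ such that $\gamma G_k=Q_k$ for all $k=1,\dots,4$ simultaneously, where $G_k$ is the heralded polynomial for input $k$ with heralding pattern $(1)$ on mode $5$.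
   Context: Heralded linear-optical model. States with a fixed photon number are homogeneous polynomials in commuting variables $a^\dagger_1,\dots,a^\dagger_N$ applied to the vacuum. Given $N$ modes, an arbitrary complex $N\times N$ matrix $A$ (not required to be unitary), and a Fock input $\prod_{i=1}^N\frac{1}{\sqrt{n_i!}}(a^\dagger_{i,\mathrm{in}})^{n_i}|0\rangle$, the output is $F|0\rangle$ with $F=\prod_{i=1}^N\frac{1}{\sqrt{n_i!}}\big(\sum_{j=1}^N A_{i,j}a^\dagger_j\big)^{n_i}$. Heralding the last $M$ modes on the pattern $(m_1,\dots,m_M)$, $m=\sum_jm_j$, gives $G=\frac{1}{\prod_jm_j!}\,\frac{\partial^{m}F}{\partial(a^\dagger_{N-M+1})^{m_1}\cdots\partial(a^\dagger_N)^{m_M}}\Big|_{a^\dagger_{N-M+1}=\cdots=a^\dagger_N=0}$, a polynomial in $a^\dagger_1,\dots,a^\dagger_{N-M}$. A heralded gate requires a single matrix $A$ and a single common $\gamma$ to satisfy $\gamma G_k=Q_k$ for every input–output pair $k$. *)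

theory Defs
  imports "HOL-Analysis.Analysis"
begin

text \<open>Modes are indexed 0..N-1 (paper's mode i is index i-1). A state polynomial in the
commuting variables a_0,...,a_{N-1} is represented by its polynomial function
(nat => complex) => complex; over the infinite field C this is faithful.
A complex N x N matrix is a function nat => nat => complex (only entries < N are used).\<close>

definition lin_out :: "nat \<Rightarrow> (nat \<Rightarrow> nat \<Rightarrow> complex) \<Rightarrow> nat \<Rightarrow> (nat \<Rightarrow> complex) \<Rightarrow> complex" where
  "lin_out N A i a = (\<Sum>j<N. A i j * a j)"

definition out_poly :: "nat \<Rightarrow> (nat \<Rightarrow> nat \<Rightarrow> complex) \<Rightarrow> (nat \<Rightarrow> nat) \<Rightarrow> (nat \<Rightarrow> complex) \<Rightarrow> complex" where
  "out_poly N A n a = (\<Prod>i<N. (lin_out N A i a) ^ (n i) / complex_of_real (sqrt (fact (n i))))"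

definition pd :: "nat \<Rightarrow> ((nat \<Rightarrow> complex) \<Rightarrow> complex) \<Rightarrow> (nat \<Rightarrow> complex) \<Rightarrow> complex" where
  "pd j f = (\<lambda>b. deriv (\<lambda>t. f (b(j := t))) (b j))"

definition heralded :: "nat \<Rightarrow> nat \<Rightarrow> (nat \<Rightarrow> nat \<Rightarrow> complex) \<Rightarrow> (nat \<Rightarrow> nat) \<Rightarrow> (nat \<Rightarrow> nat)
    \<Rightarrow> (nat \<Rightarrow> complex) \<Rightarrow> complex" where
  "heralded N M A n m a =
     (1 / (\<Prod>j\<in>{N-M..<N}. (fact (m j) :: complex))) *
     foldr (\<lambda>j g. (pd j ^^ m j) g) [N-M..<N] (out_poly N A n)
       (\<lambda>i. if N - M \<le> i \<and> i < N then 0 else a i)"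

definition cnot_in :: "nat \<Rightarrow> nat \<Rightarrow> nat" where
  "cnot_in k i = ([[1,0,1,0,1],[1,0,0,1,1],[0,1,1,0,1],[0,1,0,1,1]] ! k) ! i"

definition cnot_target :: "nat \<Rightarrow> (nat \<Rightarrow> complex) \<Rightarrow> complex" where
  "cnot_target k a = [a 0 * a 2, a 0 * a 3, a 1 * a 3, a 1 * a 2] ! k"

end

theory Submission imports Defs begin
lemma dbl:
  fixes K b B p P q Q r0 r1 r2 :: complex
  assumes h: "\<forall>x. K * (b*x+B)^2 * (p*x+P) * (q*x+Q) = r0 + r1*x + r2*x^2" and b: "b \<noteq> 0"
  shows "r0 + r1*(-B/b) + r2*(-B/b)^2 = 0 \<and> r1 + 2*r2*(-B/b) = 0"
proof -
  define x0 where "x0 = -B/b"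
  have B: "B = -b*x0" using b by (simp add: x0_def)
  define M where "M x = K*b^2*(x-x0)^2*(p*x+P)*(q*x+Q)" for x
  define R where "R x = r0 + r1*x + r2*x^2" for x
  have hh: "M x = R x" for x
  proof -
    have "M x = K * (b*x + -b*x0)^2 * (p*x+P) * (q*x+Q)" unfolding M_def power2_eq_square by (simp add: algebra_simps)
    then show ?thesis using h[rule_format, of x] unfolding R_def B by simp
  qed
  have m: "8*(M(x0+1) - M(x0-1)) - (M(x0+2)-M(x0-2)) = 0" unfolding M_def power2_eq_square by (simp add: algebra_simps)
  have r: "8*(R(x0+1) - R(x0-1)) - (R(x0+2)-R(x0-2)) = 12*(r1 + 2*r2*x0)" unfolding R_def power2_eq_square by (simp add: algebra_simps)
  have "12*(r1 + 2*r2*x0) = 0" using m r unfolding hh by simp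
  then have "r1 + 2*r2*x0 = 0" by (simp only: mult_eq_0_iff) simp
  moreover have "R x0 = 0" using hh[of x0] unfolding M_def by simp
  ultimately show ?thesis unfolding R_def x0_def by simp
qed
definition lf :: "(nat \<Rightarrow> complex) \<Rightarrow> (nat \<Rightarrow> complex) \<Rightarrow> complex" where
  "lf b a = b 0 * a 0 + b 1 * a 1 + b 2 * a 2 + b 3 * a 3"

lemma key:
  fixes K :: complex and b p q :: "nat \<Rightarrow> complex"
  assumes h: "\<forall>a. K * (lf b a)^2 * lf p a * lf q a = a 0 * a 1 * (a 2^2 - a 3^2)"
  shows False
proof -
  define pt where "pt x y z w = (\<lambda>i::nat. if i = 0 then x else if i = 1 then y else if i = 2 then z else w)"
    for x y z w :: complex
  have lfpt: "lf c (pt x y z w) = c 0 * x + c 1 * y + c 2 * z + c 3 * w" for c x y z w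
    by (simp add: lf_def pt_def)
  have hp: "K * (lf b (pt x y z w))^2 * lf p (pt x y z w) * lf q (pt x y z w) = x * y * (z^2 - w^2)" for x y z w
    using h[rule_format, of "pt x y z w"] by (simp add: pt_def)
  consider "b 0 \<noteq> 0" | "b 1 \<noteq> 0" | "b 2 \<noteq> 0" | "b 3 \<noteq> 0" | "b 0 = 0 \<and> b 1 = 0 \<and> b 2 = 0 \<and> b 3 = 0" by blast
  then show False
  proof cases
    case 1
    have "\<forall>x. K * (b 0 * x + (b 1 + b 2))^2 * (p 0 * x + (p 1 + p 2)) * (q 0 * x + (q 1 + q 2)) = 0 + 1 * x + 0 * x^2"
      using hp[of _ 1 1 0] unfolding lfpt by (simp add: algebra_simps)
    from dbl[OF this 1] show False by simp
  next
    case 2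
    have "\<forall>x. K * (b 1 * x + (b 0 + b 2))^2 * (p 1 * x + (p 0 + p 2)) * (q 1 * x + (q 0 + q 2)) = 0 + 1 * x + 0 * x^2"
      using hp[of 1 _ 1 0] unfolding lfpt by (simp add: algebra_simps)
    from dbl[OF this 2] show False by simp
  next
    case 3
    have "\<forall>x. K * (b 2 * x + (b 0 + b 1 + b 3))^2 * (p 2 * x + (p 0 + p 1 + p 3)) * (q 2 * x + (q 0 + q 1 + q 3)) = (-1) + 0 * x + 1 * x^2"
      using hp[of 1 1 _ 1] unfolding lfpt by (simp add: algebra_simps)
    from dbl[OF this 3] have "\<exists>c::complex. (-1) + 0 * c + 1 * c^2 = 0 \<and> 0 + 2 * 1 * c = 0" by blast
    then obtain c :: complex where c: "(-1) + 0 * c + 1 * c^2 = 0" "0 + 2 * 1 * c = 0" by blast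
    from c(2) have "c = 0" by simp
    with c(1) show False by simp
  next
    case 4
    have "\<forall>x. K * (b 3 * x + (b 0 + b 1 + b 2))^2 * (p 3 * x + (p 0 + p 1 + p 2)) * (q 3 * x + (q 0 + q 1 + q 2)) = 1 + 0 * x + (-1) * x^2"
      using hp[of 1 1 1 _] unfolding lfpt by (simp add: algebra_simps)
    from dbl[OF this 4] have "\<exists>c::complex. 1 + 0 * c + (-1) * c^2 = 0 \<and> 0 + 2 * (-1) * c = 0" by blast
    then obtain c :: complex where c: "1 + 0 * c + (-1) * c^2 = 0" "0 + 2 * (-1) * c = 0" by blast
    from c(2) have "c = 0" by simp
    with c(1) show False by simp
  next
    case 5
    then show False using hp[of 1 1 1 0] unfolding lfpt by simp
  qed
qed
definition u :: "(nat \<Rightarrow> nat \<Rightarrow> complex) \<Rightarrow> nat \<Rightarrow> (nat \<Rightarrow> complex) \<Rightarrow> complex" where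
  "u A i a = A i 0 * a 0 + A i 1 * a 1 + A i 2 * a 2 + A i 3 * a 3"

lemma lin_upd: "lin_out 5 A i (a(4:=t)) = u A i a + A i 4 * t"
  by (simp add: lin_out_def u_def numeral_eq_Suc lessThan_Suc)

lemma deriv3: "deriv (\<lambda>t::complex. (x1 + y1*t) * (x2 + y2*t) * (x3 + y3*t)) 0 = y1*x2*x3 + x1*y2*x3 + x1*x2*y3"
proof -
  have "((\<lambda>t::complex. (x1 + y1*t) * (x2 + y2*t) * (x3 + y3*t)) has_field_derivative
     (y1*(x2 + y2*0)*(x3+y3*0) + (x1+y1*0)*y2*(x3+y3*0) + (x1+y1*0)*(x2+y2*0)*y3)) (at 0)"
    by (auto intro!: derivative_eq_intros simp: algebra_simps)
  then show ?thesis by (simp add: DERIV_imp_deriv algebra_simps)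
qed

lemma her_gen:
  assumes op: "\<And>b. out_poly 5 A n b = lin_out 5 A p b * lin_out 5 A q b * lin_out 5 A 4 b"
  shows "heralded 5 1 A n (\<lambda>_. 1) a =
     A p 4 * u A q a * u A 4 a + u A p a * A q 4 * u A 4 a + u A p a * u A q a * A 4 4"
proof -
  have pt: "(\<lambda>i. if 5 - 1 \<le> i \<and> i < (5::nat) then 0 else a i) = a(4:=0)" by auto
  have fe: "(\<lambda>t. out_poly 5 A n ((a(4:=0))(4 := t))) =
     (\<lambda>t. (u A p a + A p 4 * t) * (u A q a + A q 4 * t) * (u A 4 a + A 4 4 * t))"
    by (simp add: op lin_upd)
  have "heralded 5 1 A n (\<lambda>_. 1) a = pd 4 (out_poly 5 A n) (a(4:=0))"
    unfolding heralded_def pt by (simp add: numeral_eq_Suc)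
  also have "\<dots> = deriv (\<lambda>t. (u A p a + A p 4 * t) * (u A q a + A q 4 * t) * (u A 4 a + A 4 4 * t)) 0"
    unfolding pd_def fe by simp
  also have "\<dots> = A p 4 * u A q a * u A 4 a + u A p a * A q 4 * u A 4 a + u A p a * u A q a * A 4 4"
    unfolding deriv3 by (simp add: algebra_simps)
  finally show ?thesis .
qed

lemma op0: "out_poly 5 A (cnot_in 0) b = lin_out 5 A 0 b * lin_out 5 A 2 b * lin_out 5 A 4 b"
  by (simp add: out_poly_def cnot_in_def numeral_eq_Suc lessThan_Suc)
lemma op1: "out_poly 5 A (cnot_in 1) b = lin_out 5 A 0 b * lin_out 5 A 3 b * lin_out 5 A 4 b"
  by (simp add: out_poly_def cnot_in_def numeral_eq_Suc lessThan_Suc)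
lemma op2: "out_poly 5 A (cnot_in 2) b = lin_out 5 A 1 b * lin_out 5 A 2 b * lin_out 5 A 4 b"
  by (simp add: out_poly_def cnot_in_def numeral_eq_Suc lessThan_Suc)
lemma op3: "out_poly 5 A (cnot_in 3) b = lin_out 5 A 1 b * lin_out 5 A 3 b * lin_out 5 A 4 b"
  by (simp add: out_poly_def cnot_in_def numeral_eq_Suc lessThan_Suc)

theorem mainTheorem5:
  shows "\<not> (\<exists>(A :: nat \<Rightarrow> nat \<Rightarrow> complex) (\<gamma> :: complex).
            \<forall>k < 4. \<forall>a :: nat \<Rightarrow> complex.
              \<gamma> * heralded 5 1 A (cnot_in k) (\<lambda>_. 1) a = cnot_target k a)"
proof
  assume "\<exists>(A :: nat \<Rightarrow> nat \<Rightarrow> complex) (\<gamma> :: complex).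
            \<forall>k < 4. \<forall>a :: nat \<Rightarrow> complex.
              \<gamma> * heralded 5 1 A (cnot_in k) (\<lambda>_. 1) a = cnot_target k a"
  then obtain A and \<gamma> :: complex where H: "\<forall>k < 4. \<forall>a :: nat \<Rightarrow> complex.
              \<gamma> * heralded 5 1 A (cnot_in k) (\<lambda>_. 1) a = cnot_target k a" by blast
  have e0: "\<gamma> * (A 0 4 * u A 2 a * u A 4 a + u A 0 a * A 2 4 * u A 4 a + u A 0 a * u A 2 a * A 4 4) = a 0 * a 2" for a
    using H[rule_format, of 0 a] unfolding her_gen[OF op0] by (simp add: cnot_target_def)
  have e1: "\<gamma> * (A 0 4 * u A 3 a * u A 4 a + u A 0 a * A 3 4 * u A 4 a + u A 0 a * u A 3 a * A 4 4) = a 0 * a 3" for a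
    using H[rule_format, of 1 a] unfolding her_gen[OF op1] by (simp add: cnot_target_def)
  have e2: "\<gamma> * (A 1 4 * u A 2 a * u A 4 a + u A 1 a * A 2 4 * u A 4 a + u A 1 a * u A 2 a * A 4 4) = a 1 * a 3" for a
    using H[rule_format, of 2 a] unfolding her_gen[OF op2] by (simp add: cnot_target_def)
  have e3: "\<gamma> * (A 1 4 * u A 3 a * u A 4 a + u A 1 a * A 3 4 * u A 4 a + u A 1 a * u A 3 a * A 4 4) = a 1 * a 2" for a
    using H[rule_format, of 3 a] unfolding her_gen[OF op3] by (simp add: cnot_target_def)
  define b where "b j = A 4 j" for j
  define p where "p j = A 0 4 * A 1 j - A 1 4 * A 0 j" for j
  define q where "q j = A 3 4 * A 2 j - A 2 4 * A 3 j" for j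
  have "\<forall>a. \<gamma>^2 * (lf b a)^2 * lf p a * lf q a = a 0 * a 1 * (a 2^2 - a 3^2)"
  proof
    fix a :: "nat \<Rightarrow> complex"
    have lb: "lf b a = u A 4 a" by (simp add: lf_def u_def b_def)
    have lp: "lf p a = A 0 4 * u A 1 a - A 1 4 * u A 0 a" by (simp add: lf_def u_def p_def algebra_simps)
    have lq: "lf q a = A 3 4 * u A 2 a - A 2 4 * u A 3 a" by (simp add: lf_def u_def q_def algebra_simps)
    have "a 0 * a 1 * (a 2^2 - a 3^2) = a 0 * a 2 * (a 1 * a 2) - a 0 * a 3 * (a 1 * a 3)"
      by (simp add: algebra_simps power2_eq_square)
    also have "\<dots> = \<gamma> * (A 0 4 * u A 2 a * u A 4 a + u A 0 a * A 2 4 * u A 4 a + u A 0 a * u A 2 a * A 4 4)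
       * (\<gamma> * (A 1 4 * u A 3 a * u A 4 a + u A 1 a * A 3 4 * u A 4 a + u A 1 a * u A 3 a * A 4 4))
     - \<gamma> * (A 0 4 * u A 3 a * u A 4 a + u A 0 a * A 3 4 * u A 4 a + u A 0 a * u A 3 a * A 4 4)
       * (\<gamma> * (A 1 4 * u A 2 a * u A 4 a + u A 1 a * A 2 4 * u A 4 a + u A 1 a * u A 2 a * A 4 4))"
      by (simp only: e0 e1 e2 e3)
    also have "\<dots> = \<gamma>^2 * (u A 4 a)^2 * (A 0 4 * u A 1 a - A 1 4 * u A 0 a) * (A 3 4 * u A 2 a - A 2 4 * u A 3 a)"
      by (simp add: algebra_simps power2_eq_square)
    finally show "\<gamma>^2 * (lf b a)^2 * lf p a * lf q a = a 0 * a 1 * (a 2^2 - a 3^2)"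
      unfolding lb lp lq by simp
  qed
  then show False by (rule key)
qed

end
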